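(* Let $n\ge 2$. For every $T\in\mathrm{C}$ we have $\tilde T T\in\mathrm{C}^{\overline{01}}$. Consequently, $$\mathrm{A}=\begin{cases}\{T\in\mathrm{C}^\times:\ \tilde T T\in(\mathrm{C}^0)^\times\}, & n\equiv 0,2,3 \pmod 4,\\ \{T\in\mathrm{C}^\times:\ \tilde T T\in(\mathrm{C}^0\oplus\mathrm{C}^n)^\times\}, & n\equiv 1\pmod 4.\end{cases}$$
   Context: Let $\mathrm{C}$ be either the real Clifford algebra $C\ell_{p,q}$ with $p+q=n$, or the complex Clifford algebra $C\ell(\mathbb{C}^n)$. It has identity $e$ and generators $e_1,\dots,e_n$ satisfying $e_ae_b+e_be_a=2\eta_{ab}e$. In the real case $\eta=\mathrm{diag}(1,\dots,1,-1,\dots,-1)$ with $p$ entries $+1$ and $q$ entries $-1$. In the complex case $\eta=I_n$. $\mathrm{C}^k$ is the grade-$k$ subspace, spanned by the products $e_{a_1}\cdots e_{a_k}$ with $a_1<\dots<a_k$. The reversion $U\mapsto\tilde U$ is the linear anti-automorphism acting on $\mathrm{C}^k$ as multiplication by $(-1)^{k(k-1)/2}$. For $m=0,1,2,3$ let $\mathrm{C}^{\overline m}=\bigoplus_{k\equiv m \pmod 4}\mathrm{C}^k$, and $\mathrm{C}^{\overline{kl}}=\mathrm{C}^{\overline k}\oplus\mathrm{C}^{\overline l}$. For $S\subseteq\mathrm{C}$, $S^\times$ is the set of elements of $S$ invertible in $\mathrm{C}$. $\mathrm{Z}$ is the center of $\mathrm{C}$: $\mathrm{Z}=\mathrm{C}^0$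 for $n$ even and $\mathrm{Z}=\mathrm{C}^0\oplus\mathrm{C}^n$ for $n$ odd. Define $\mathrm{A}:=\{T\in\mathrm{C}^\times:\ \tilde T T\in\mathrm{Z}^\times\}$. *)

theory Defs
  imports Main "HOL-Analysis.Analysis"
begin

text \<open>Clifford algebra with generators e_0,...,e_(n-1) (0-based indexing) and
 diagonal metric eta. An element is a coefficient function on blades, i.e. on
 subsets of {0..<n}; the blade A corresponds to the ordered product of e_a, a in A.\<close>

definition cl_carrier :: "nat \<Rightarrow> (nat set \<Rightarrow> 'a::comm_ring_1) set" where
  "cl_carrier n = {x. \<forall>A. x A \<noteq> 0 \<longrightarrow> A \<subseteq> {0..<n}}"

text \<open>Sign of reordering e_A e_B: number of pairs (a,b) in A x B with b < a.\<close>
definition blade_sign :: "nat set \<Rightarrow> nat set \<Rightarrow> 'a::comm_ring_1" where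
  "blade_sign A B = (-1) ^ card {(a, b). a \<in> A \<and> b \<in> B \<and> b < a}"

definition cl_mult :: "nat \<Rightarrow> (nat \<Rightarrow> 'a::comm_ring_1) \<Rightarrow> (nat set \<Rightarrow> 'a) \<Rightarrow> (nat set \<Rightarrow> 'a) \<Rightarrow> (nat set \<Rightarrow> 'a)" where
  "cl_mult n eta x y = (\<lambda>C. \<Sum>A\<in>Pow {0..<n}. \<Sum>B\<in>Pow {0..<n}.
      if (A - B) \<union> (B - A) = C
      then blade_sign A B * (\<Prod>i\<in>A \<inter> B. eta i) * x A * y B else 0)"

definition cl_one :: "nat set \<Rightarrow> 'a::comm_ring_1" where
  "cl_one = (\<lambda>A. if A = {} then 1 else 0)"

definition cl_rev :: "(nat set \<Rightarrow> 'a::comm_ring_1) \<Rightarrow> (nat set \<Rightarrow> 'a)" where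
  "cl_rev x = (\<lambda>A. (-1) ^ (card A * (card A - 1) div 2) * x A)"

definition cl_grades :: "nat \<Rightarrow> nat set \<Rightarrow> (nat set \<Rightarrow> 'a::comm_ring_1) set" where
  "cl_grades n K = {x \<in> cl_carrier n. \<forall>A. x A \<noteq> 0 \<longrightarrow> card A \<in> K}"

definition cl_bar01 :: "nat \<Rightarrow> (nat set \<Rightarrow> 'a::comm_ring_1) set" where
  "cl_bar01 n = cl_grades n {k. k mod 4 = 0 \<or> k mod 4 = 1}"

definition cl_invertible :: "nat \<Rightarrow> (nat \<Rightarrow> 'a::comm_ring_1) \<Rightarrow> (nat set \<Rightarrow> 'a) \<Rightarrow> bool" where
  "cl_invertible n eta x \<longleftrightarrow> x \<in> cl_carrier n \<and>
     (\<exists>y \<in> cl_carrier n. cl_mult n eta x y = cl_one \<and> cl_mult n eta y x = cl_one)"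

definition cl_units :: "nat \<Rightarrow> (nat \<Rightarrow> 'a::comm_ring_1) \<Rightarrow> (nat set \<Rightarrow> 'a) set \<Rightarrow> (nat set \<Rightarrow> 'a) set" where
  "cl_units n eta S = {x \<in> S. cl_invertible n eta x}"

definition cl_center :: "nat \<Rightarrow> (nat \<Rightarrow> 'a::comm_ring_1) \<Rightarrow> (nat set \<Rightarrow> 'a) set" where
  "cl_center n eta = {z \<in> cl_carrier n. \<forall>x \<in> cl_carrier n. cl_mult n eta z x = cl_mult n eta x z}"

definition cl_A :: "nat \<Rightarrow> (nat \<Rightarrow> 'a::comm_ring_1) \<Rightarrow> (nat set \<Rightarrow> 'a) set" where
  "cl_A n eta = {T \<in> cl_units n eta (cl_carrier n).
      cl_mult n eta (cl_rev T) T \<in> cl_units n eta (cl_center n eta)}"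

definition cl_claim :: "nat \<Rightarrow> (nat \<Rightarrow> 'a::comm_ring_1) \<Rightarrow> bool" where
  "cl_claim n eta \<longleftrightarrow>
     (\<forall>T \<in> cl_carrier n. cl_mult n eta (cl_rev T) T \<in> cl_bar01 n) \<and>
     cl_A n eta =
       (if n mod 4 = 1
        then {T \<in> cl_units n eta (cl_carrier n).
                cl_mult n eta (cl_rev T) T \<in> cl_units n eta (cl_grades n {0, n})}
        else {T \<in> cl_units n eta (cl_carrier n).
                cl_mult n eta (cl_rev T) T \<in> cl_units n eta (cl_grades n {0})})"

text \<open>Real signature (p,q): eta_i = 1 for i < p, -1 otherwise (0-based).\<close>
definition eta_real :: "nat \<Rightarrow> nat \<Rightarrow> real" where
  "eta_real p i = (if i < p then 1 else -1)"

end

theory Submission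
  imports Defs
begin

definition NN :: "nat set \<Rightarrow> nat set \<Rightarrow> nat" where
  "NN X Y = card {(a,b). a\<in>X \<and> b\<in>Y \<and> b<a}"

lemma blade_sign_NN: "blade_sign A B = (-1) ^ NN A B"
  by (simp add: blade_sign_def NN_def)

lemma NN_fin: "finite X \<Longrightarrow> finite Y \<Longrightarrow> finite {(a,b). a\<in>X \<and> b\<in>Y \<and> (P a b)}"
  by (rule finite_subset[of _ "X \<times> Y"]) auto

lemma NN_Un_left:
  assumes "finite X1" "finite X2" "finite Y" "X1 \<inter> X2 = {}"
  shows "NN (X1 \<union> X2) Y = NN X1 Y + NN X2 Y"
proof -
  have "{(a,b). a\<in>X1\<union>X2 \<and> b\<in>Y \<and> b<a} = {(a,b). a\<in>X1 \<and> b\<in>Y \<and> b<a} \<union> {(a,b). a\<in>X2 \<and> b\<in>Y \<and> b<a}"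
    by auto
  moreover have "card ({(a,b). a\<in>X1 \<and> b\<in>Y \<and> b<a} \<union> {(a,b). a\<in>X2 \<and> b\<in>Y \<and> b<a}) = card {(a,b). a\<in>X1 \<and> b\<in>Y \<and> b<a} + card {(a,b). a\<in>X2 \<and> b\<in>Y \<and> b<a}"
    by (rule card_Un_disjoint) (use assms in \<open>auto intro: NN_fin\<close>)
  ultimately show ?thesis unfolding NN_def by simp
qed

lemma NN_Un_right:
  assumes "finite Y1" "finite Y2" "finite X" "Y1 \<inter> Y2 = {}"
  shows "NN X (Y1 \<union> Y2) = NN X Y1 + NN X Y2"
proof -
  have "{(a,b). a\<in>X \<and> b\<in>Y1\<union>Y2 \<and> b<a} = {(a,b). a\<in>X \<and> b\<in>Y1 \<and> b<a} \<union> {(a,b). a\<in>X \<and> b\<in>Y2 \<and> b<a}"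
    by auto
  moreover have "card ({(a,b). a\<in>X \<and> b\<in>Y1 \<and> b<a} \<union> {(a,b). a\<in>X \<and> b\<in>Y2 \<and> b<a}) = card {(a,b). a\<in>X \<and> b\<in>Y1 \<and> b<a} + card {(a,b). a\<in>X \<and> b\<in>Y2 \<and> b<a}"
    by (rule card_Un_disjoint) (use assms in \<open>auto intro: NN_fin\<close>)
  ultimately show ?thesis unfolding NN_def by simp
qed

lemma NN_swap_count:
  assumes "finite A" "finite B"
  shows "NN A B + NN B A + card (A \<inter> B) = card A * card B"
proof -
  have e: "A \<times> B = {(a,b). a\<in>A \<and> b\<in>B \<and> b<a} \<union> {(a,b). a\<in>A \<and> b\<in>B \<and> a<b} \<union> {(a,b). a\<in>A \<and> b\<in>B \<and> a=b}"
    by auto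
  have c1: "card {(a,b). a\<in>A \<and> b\<in>B \<and> a<b} = NN B A"
  proof -
    have "{(a,b). a\<in>B \<and> b\<in>A \<and> b<a} = (\<lambda>(a,b). (b,a)) ` {(a,b). a\<in>A \<and> b\<in>B \<and> a<b}"
      by (auto simp: image_iff)
    then have "NN B A = card ((\<lambda>(a,b). (b,a)) ` {(a,b). a\<in>A \<and> b\<in>B \<and> a<b})" unfolding NN_def by (simp only:)
    also have "\<dots> = card {(a,b). a\<in>A \<and> b\<in>B \<and> a<b}" by (rule card_image[OF swap_inj_on])
    finally show ?thesis by simp

  qed
  have c2: "card {(a,b). a\<in>A \<and> b\<in>B \<and> a=b} = card (A \<inter> B)"
    by (rule bij_betw_same_card[of "\<lambda>(a,b). a"]) (auto simp: bij_betw_def inj_on_def image_def)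
  have "card (A \<times> B) = card {(a,b). a\<in>A \<and> b\<in>B \<and> b<a} + card {(a,b). a\<in>A \<and> b\<in>B \<and> a<b} + card {(a,b). a\<in>A \<and> b\<in>B \<and> a=b}"
    unfolding e
    by (subst card_Un_disjoint, auto simp: NN_fin assms)+
  then show ?thesis using c1 c2 by (simp add: card_cartesian_product NN_def)
qed

lemma NN_self:
  assumes "finite X" shows "NN X X = card X * (card X - 1) div 2"
proof -
  have "2 * NN X X + card X = card X * card X" using NN_swap_count[OF assms assms] by simp
  then have "card X * (card X - 1) = 2 * NN X X"
    by (simp add: diff_mult_distrib2)
  then show ?thesis by simp
qed

lemma rev_sign: "finite X \<Longrightarrow> (-1::'a::comm_ring_1) ^ (card X * (card X - 1) div 2) = blade_sign X X"
  by (simp add: NN_self blade_sign_NN)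

lemma m1_pow_add2: "(-1::'a::comm_ring_1) ^ (L + 2 * k) = (-1) ^ L"
  by (simp add: power_add power_mult)

lemma sign_PQI:
  assumes f: "finite P" "finite Q" "finite I" and d: "P \<inter> Q = {}" "P \<inter> I = {}" "Q \<inter> I = {}"
  shows "(-1::'a::comm_ring_1) ^ (NN (P\<union>Q) (P\<union>Q) + NN (P\<union>I) (Q\<union>I))
       = (-1) ^ (NN (P\<union>I) (P\<union>I) + NN (Q\<union>I) (Q\<union>I) + NN (Q\<union>I) (P\<union>I))"
proof -
  have dd: "Q \<inter> P = {}" "I \<inter> P = {}" "I \<inter> Q = {}" using d by blast+
  note s = NN_Un_left NN_Un_right f d dd finite_UnI
  have L: "NN (P\<union>Q) (P\<union>Q) + NN (P\<union>I) (Q\<union>I) + 2 * (NN I P + NN I I + NN Q I)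
     = NN (P\<union>I) (P\<union>I) + NN (Q\<union>I) (Q\<union>I) + NN (Q\<union>I) (P\<union>I) + 2 * NN P Q"
    by (simp add: s)
  have "(-1::'a) ^ (NN (P\<union>Q) (P\<union>Q) + NN (P\<union>I) (Q\<union>I)) = (-1) ^ (NN (P\<union>Q) (P\<union>Q) + NN (P\<union>I) (Q\<union>I) + 2 * (NN I P + NN I I + NN Q I))"
    by (rule m1_pow_add2[symmetric])
  also have "\<dots> = (-1) ^ (NN (P\<union>I) (P\<union>I) + NN (Q\<union>I) (Q\<union>I) + NN (Q\<union>I) (P\<union>I) + 2 * NN P Q)"
    by (simp only: L)
  also have "\<dots> = (-1) ^ (NN (P\<union>I) (P\<union>I) + NN (Q\<union>I) (Q\<union>I) + NN (Q\<union>I) (P\<union>I))"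
    by (rule m1_pow_add2)
  finally show ?thesis .
qed

lemma sign_rev_blade:
  assumes "finite A" "finite B"
  shows "blade_sign ((A - B) \<union> (B - A)) ((A - B) \<union> (B - A)) * blade_sign A B
       = blade_sign A A * blade_sign B B * (blade_sign B A :: 'a::comm_ring_1)"
proof -
  have a: "A = (A-B) \<union> (A\<inter>B)" and b: "B = (B-A) \<union> (A\<inter>B)" by blast+
  have "(-1::'a) ^ (NN ((A-B)\<union>(B-A)) ((A-B)\<union>(B-A)) + NN ((A-B)\<union>(A\<inter>B)) ((B-A)\<union>(A\<inter>B)))
       = (-1) ^ (NN ((A-B)\<union>(A\<inter>B)) ((A-B)\<union>(A\<inter>B)) + NN ((B-A)\<union>(A\<inter>B)) ((B-A)\<union>(A\<inter>B)) + NN ((B-A)\<union>(A\<inter>B)) ((A-B)\<union>(A\<inter>B)))"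
    by (rule sign_PQI) (use assms in auto)
  moreover have e: "(A-B) \<union> (A\<inter>B) = A" "(B-A) \<union> (A\<inter>B) = B" by blast+
  ultimately have "(-1::'a) ^ (NN ((A-B)\<union>(B-A)) ((A-B)\<union>(B-A)) + NN A B)
       = (-1) ^ (NN A A + NN B B + NN B A)" by (simp only:)
  then show ?thesis unfolding blade_sign_NN power_add[symmetric] .
qed


definition rsgn :: "nat set \<Rightarrow> 'a::comm_ring_1" where
  "rsgn A = (-1) ^ (card A * (card A - 1) div 2)"

lemma cl_rev_rsgn: "cl_rev x = (\<lambda>A. rsgn A * x A)"
  by (simp add: cl_rev_def rsgn_def)

lemma rsgn_sq: "rsgn A * rsgn A = (1::'a::comm_ring_1)"
  by (simp add: rsgn_def power_add[symmetric])

lemma rev_rev: "cl_rev (cl_rev x) = (x :: nat set \<Rightarrow> 'a::comm_ring_1)"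
  by (simp add: cl_rev_rsgn mult.assoc[symmetric] rsgn_sq)

lemma finite_Pow_sub: "(A::nat set) \<in> Pow {0..<(n::nat)} \<Longrightarrow> finite A"
  using finite_subset[of A "{0..<n}"] by simp

lemma rev_mult:
  "cl_rev (cl_mult n eta x y) = cl_mult n eta (cl_rev y) (cl_rev (x :: nat set \<Rightarrow> 'a::comm_ring_1))"
proof (rule ext)
  fix C
  have "cl_rev (cl_mult n eta x y) C = (\<Sum>A\<in>Pow {0..<n}. \<Sum>B\<in>Pow {0..<n}.
      rsgn C * (if (A - B) \<union> (B - A) = C
      then blade_sign A B * (\<Prod>i\<in>A \<inter> B. eta i) * x A * y B else 0))"
    by (simp add: cl_rev_rsgn cl_mult_def sum_distrib_left)
  also have "\<dots> = (\<Sum>A\<in>Pow {0..<n}. \<Sum>B\<in>Pow {0..<n}.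
      (if (B - A) \<union> (A - B) = C
      then blade_sign B A * (\<Prod>i\<in>B \<inter> A. eta i) * (rsgn B * y B) * (rsgn A * x A) else 0))"
  proof (intro sum.cong refl)
    fix A B assume A: "A \<in> Pow {0..<n}" and B: "B \<in> Pow {0..<n}"
    have fA: "finite A" and fB: "finite B" using A B by (auto intro: finite_Pow_sub)
    have fC: "finite ((A - B) \<union> (B - A))" using fA fB by auto
    have key: "rsgn ((A - B) \<union> (B - A)) * blade_sign A B = rsgn A * rsgn B * (blade_sign B A :: 'a)"
      unfolding rsgn_def rev_sign[OF fA] rev_sign[OF fB] rev_sign[OF fC]
      using sign_rev_blade[OF fA fB] by (simp add: ac_simps)
    have e1: "(B - A) \<union> (A - B) = (A - B) \<union> (B - A)" by blast
    have e2: "B \<inter> A = A \<inter> B" by blast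
    show "rsgn C * (if (A - B) \<union> (B - A) = C
      then blade_sign A B * (\<Prod>i\<in>A \<inter> B. eta i) * x A * y B else 0) =
      (if (B - A) \<union> (A - B) = C
      then blade_sign B A * (\<Prod>i\<in>B \<inter> A. eta i) * (rsgn B * y B) * (rsgn A * x A) else 0)"
    proof (cases "(A - B) \<union> (B - A) = C")
      case True
      then have "rsgn C * (blade_sign A B * (\<Prod>i\<in>A \<inter> B. eta i) * x A * y B)
         = (rsgn ((A - B) \<union> (B - A)) * blade_sign A B) * (\<Prod>i\<in>A \<inter> B. eta i) * x A * y B"
        by (simp add: ac_simps)
      also have "\<dots> = blade_sign B A * (\<Prod>i\<in>B \<inter> A. eta i) * (rsgn B * y B) * (rsgn A * x A)"
        unfolding key e2 by (simp add: ac_simps)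
      finally show ?thesis using True e1 by simp
    next
      case False
      then show ?thesis using e1 by simp
    qed
  qed
  also have "\<dots> = cl_mult n eta (cl_rev y) (cl_rev x) C"
    unfolding cl_mult_def cl_rev_rsgn by (rule sum.swap)
  finally show "cl_rev (cl_mult n eta x y) C = cl_mult n eta (cl_rev y) (cl_rev x) C" .
qed

lemma mult_carrier: "cl_mult n eta x y \<in> cl_carrier n"
  unfolding cl_carrier_def
proof (intro CollectI allI impI)
  fix C assume nz: "cl_mult n eta x y C \<noteq> 0"
  show "C \<subseteq> {0..<n}"
  proof (rule ccontr)
    assume "\<not> C \<subseteq> {0..<n}"
    then have "\<forall>A\<in>Pow {0..<n}. \<forall>B\<in>Pow {0..<n}. (A - B) \<union> (B - A) \<noteq> C" by blast
    then have "cl_mult n eta x y C = 0" unfolding cl_mult_def by (simp)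
    with nz show False by simp
  qed
qed

lemma m1_pow_eq1: "(-1::'a::field_char_0) ^ k = 1 \<Longrightarrow> even k"
  by (cases "even k") auto

lemma rsgn_bad: "card A mod 4 = 2 \<or> card A mod 4 = 3 \<Longrightarrow> rsgn A = (-1::'a::comm_ring_1)"
proof -
  assume h: "card A mod 4 = 2 \<or> card A mod 4 = 3"
  define k where "k = card A"
  obtain m where m: "k = 4 * m + (k mod 4)" by (metis div_mult_mod_eq mult.commute)
  have "odd (k * (k - 1) div 2)"
  proof (cases "k mod 4 = 2")
    case True
    then have "k = 4*m+2" using m by simp
    then have "k * (k - 1) = 2 * ((2*m+1)*(4*m+1))" by (simp add: algebra_simps)
    then show ?thesis by simp
  next
    case False
    then have "k = 4*m+3" using m h k_def by simp
    then have "k * (k - 1) = 2 * ((4*m+3)*(2*m+1))" by (simp add: algebra_simps)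
    then show ?thesis by simp
  qed
  then show ?thesis unfolding rsgn_def k_def by simp
qed


definition ev :: "nat \<Rightarrow> nat set \<Rightarrow> 'a::comm_ring_1" where
  "ev i = (\<lambda>A. if A = {i} then 1 else 0)"

lemma ev_carrier: "i < n \<Longrightarrow> ev i \<in> cl_carrier n"
  by (auto simp: cl_carrier_def ev_def)

lemma symdiff_cancel: "((A::nat set) - B) \<union> (B - A) = (A' - B) \<union> (B - A') \<longleftrightarrow> A = A'"
  by (auto simp: set_eq_iff)

lemma mult_ev_right:
  assumes "i < n" "A0 \<subseteq> {0..<n}"
  shows "cl_mult n eta z (ev i) ((A0 - {i}) \<union> ({i} - A0))
       = blade_sign A0 {i} * (\<Prod>j\<in>A0 \<inter> {i}. eta j) * z A0"
proof -
  let ?C = "(A0 - {i}) \<union> ({i} - A0)"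
  have "cl_mult n eta z (ev i) ?C = (\<Sum>A\<in>Pow {0..<n}.
      if A = A0 then blade_sign A {i} * (\<Prod>j\<in>A \<inter> {i}. eta j) * z A else 0)"
    unfolding cl_mult_def
  proof (rule sum.cong[OF refl])
    fix A assume A: "A \<in> Pow {0..<n}"
    have "(\<Sum>B\<in>Pow {0..<n}. if (A - B) \<union> (B - A) = ?C
          then blade_sign A B * (\<Prod>j\<in>A \<inter> B. eta j) * z A * ev i B else 0)
        = (\<Sum>B\<in>Pow {0..<n}. if B = {i} then (if A = A0
          then blade_sign A {i} * (\<Prod>j\<in>A \<inter> {i}. eta j) * z A else 0) else 0)"
      by (rule sum.cong[OF refl]) (auto simp: ev_def symdiff_cancel)
    also have "\<dots> = (if A = A0
          then blade_sign A {i} * (\<Prod>j\<in>A \<inter> {i}. eta j) * z A else 0)"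
      using assms by (simp add: sum.delta)
    finally show "(\<Sum>B\<in>Pow {0..<n}. if (A - B) \<union> (B - A) = ?C
          then blade_sign A B * (\<Prod>j\<in>A \<inter> B. eta j) * z A * ev i B else 0) = (if A = A0
          then blade_sign A {i} * (\<Prod>j\<in>A \<inter> {i}. eta j) * z A else 0)" .
  qed
  also have "\<dots> = blade_sign A0 {i} * (\<Prod>j\<in>A0 \<inter> {i}. eta j) * z A0"
    using assms by (simp add: sum.delta)
  finally show ?thesis .
qed

lemma symdiff_cancel2: "((B::nat set) - A) \<union> (A - B) = (B - A') \<union> (A' - B) \<longleftrightarrow> A = A'"
  using symdiff_cancel[of A B A'] by (simp add: Un_commute)

lemma mult_ev_left:
  assumes "i < n" "A0 \<subseteq> {0..<n}"
  shows "cl_mult n eta (ev i) z ((A0 - {i}) \<union> ({i} - A0))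
       = blade_sign {i} A0 * (\<Prod>j\<in>A0 \<inter> {i}. eta j) * z A0"
proof -
  let ?C = "({i} - A0) \<union> (A0 - {i})"
  have C: "(A0 - {i}) \<union> ({i} - A0) = ?C" by blast
  have "cl_mult n eta (ev i) z ?C = (\<Sum>A\<in>Pow {0..<n}.
      if A = {i} then blade_sign {i} A0 * (\<Prod>j\<in>A0 \<inter> {i}. eta j) * z A0 else 0)"
    unfolding cl_mult_def
  proof (rule sum.cong[OF refl])
    fix A assume A: "A \<in> Pow {0..<n}"
    have "(\<Sum>B\<in>Pow {0..<n}. if (A - B) \<union> (B - A) = ?C
          then blade_sign A B * (\<Prod>j\<in>A \<inter> B. eta j) * ev i A * z B else 0)
        = (\<Sum>B\<in>Pow {0..<n}. if B = A0 then (if A = {i}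
          then blade_sign {i} A0 * (\<Prod>j\<in>A0 \<inter> {i}. eta j) * z A0 else 0) else 0)"
      by (rule sum.cong[OF refl]) (auto simp: ev_def symdiff_cancel2 Int_commute)
    also have "\<dots> = (if A = {i}
          then blade_sign {i} A0 * (\<Prod>j\<in>A0 \<inter> {i}. eta j) * z A0 else 0)"
      using assms by (simp add: sum.delta)
    finally show "(\<Sum>B\<in>Pow {0..<n}. if (A - B) \<union> (B - A) = ?C
          then blade_sign A B * (\<Prod>j\<in>A \<inter> B. eta j) * ev i A * z B else 0) = (if A = {i}
          then blade_sign {i} A0 * (\<Prod>j\<in>A0 \<inter> {i}. eta j) * z A0 else 0)" .
  qed
  also have "\<dots> = blade_sign {i} A0 * (\<Prod>j\<in>A0 \<inter> {i}. eta j) * z A0"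
    using assms by (simp add: sum.delta)
  finally show ?thesis using C by simp
qed


lemma bs_sq: "blade_sign A B * blade_sign A B = (1::'a::comm_ring_1)"
  by (simp add: blade_sign_NN power_add[symmetric])

lemma bs_prod: "blade_sign A B * blade_sign B A = ((-1::'a::comm_ring_1) ^ (NN A B + NN B A))"
  by (simp add: blade_sign_NN power_add)

lemma center_blade:
  fixes eta :: "nat \<Rightarrow> 'a::field_char_0"
  assumes eta: "\<forall>i<n. eta i \<noteq> 0" and z: "z \<in> cl_center n eta"
    and A: "A \<subseteq> {0..<n}" and nz: "z A \<noteq> 0" and i: "i < n"
  shows "even (card A - card (A \<inter> {i}))"
proof -
  have fA: "finite A" using A finite_subset by blast
  have "cl_mult n eta z (ev i) = cl_mult n eta (ev i) z"
    using z ev_carrier[OF i] by (auto simp: cl_center_def)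
  then have eq: "blade_sign A {i} * (\<Prod>j\<in>A \<inter> {i}. eta j) * z A
      = blade_sign {i} A * (\<Prod>j\<in>A \<inter> {i}. eta j) * z A"
    using mult_ev_right[OF i A, of eta z] mult_ev_left[OF i A, of eta z] by metis
  have P: "(\<Prod>j\<in>A \<inter> {i}. eta j) \<noteq> 0"
  proof (cases "i \<in> A")
    case True then have "A \<inter> {i} = {i}" by blast
    then show ?thesis using eta i by simp
  next
    case False then have "A \<inter> {i} = {}" by blast
    then show ?thesis by simp
  qed
  have s: "blade_sign A {i} = (blade_sign {i} A :: 'a)" using eq P nz by simp
  have "((-1::'a) ^ (NN A {i} + NN {i} A)) = blade_sign A {i} * blade_sign {i} A"
    by (rule bs_prod[symmetric])
  also have "\<dots> = 1" using s bs_sq[of "{i}" A] by simp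
  finally have "even (NN A {i} + NN {i} A)" by (rule m1_pow_eq1)
  moreover have "NN A {i} + NN {i} A + card (A \<inter> {i}) = card A"
    using NN_swap_count[OF fA, of "{i}"] by simp
  ultimately show ?thesis by (metis add_diff_cancel_right')
qed

lemma center_support:
  fixes eta :: "nat \<Rightarrow> 'a::field_char_0"
  assumes eta: "\<forall>i<n. eta i \<noteq> 0" and z: "z \<in> cl_center n eta" and nz: "z A \<noteq> 0"
  shows "A = {} \<or> (A = {0..<n} \<and> odd n)"
proof -
  have A: "A \<subseteq> {0..<n}" using z nz by (auto simp: cl_center_def cl_carrier_def)
  have fA: "finite A" using A finite_subset by blast
  show ?thesis
  proof (cases "A = {}")
    case False
    then obtain i where iA: "i \<in> A" by blast
    then have "i < n" using A by auto
    have "A \<inter> {i} = {i}" using iA by blast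
    then have ev1: "even (card A - 1)" using center_blade[OF eta z A nz \<open>i<n\<close>] by simp
    have c1: "card A \<ge> 1" using iA fA by (metis One_nat_def Suc_leI card_gt_0_iff empty_iff)
    have oddA: "odd (card A)" using ev1 c1 by (metis add_diff_inverse_nat even_add le_numeral_extra(4) less_one not_le odd_one)
    have "A = {0..<n}"
    proof (rule ccontr)
      assume "A \<noteq> {0..<n}"
      then obtain j where j: "j < n" "j \<notin> A" using A
        by (meson atLeastLessThan_iff subsetI subset_antisym zero_le)
      then have "A \<inter> {j} = {}" by blast
      then have "even (card A)" using center_blade[OF eta z A nz j(1)] by simp
      with oddA show False by simp
    qed
    then show ?thesis using oddA by simp
  qed simp
qed

lemma sign_comm:
  assumes "A = {} \<or> (A = {0..<n} \<and> odd n)" "B \<subseteq> {0..<n}"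
  shows "blade_sign A B = (blade_sign B A :: 'a::comm_ring_1)"
  using assms(1)
proof
  assume "A = {}" then show ?thesis by (simp add: blade_sign_NN NN_def)
next
  assume h: "A = {0..<n} \<and> odd n"
  have fB: "finite B" using assms(2) finite_subset by blast
  have "A \<inter> B = B" using h assms(2) by blast
  then have "NN A B + NN B A + card B = n * card B"
    using NN_swap_count[of A B] h fB by simp
  then have "NN A B + NN B A = (n - 1) * card B" by (simp add: diff_mult_distrib)
  moreover have "even (n - 1)" using h by simp
  ultimately have "even (NN A B + NN B A)" by simp
  then have p: "blade_sign A B * blade_sign B A = (1::'a)" by (simp add: bs_prod)
  have "blade_sign A B = blade_sign A B * (blade_sign B A * (blade_sign B A :: 'a))"
    by (simp add: bs_sq)
  also have "\<dots> = blade_sign B A" using p by (metis mult.assoc mult_1)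
  finally show ?thesis .
qed

lemma center_intro:
  assumes x: "x \<in> cl_carrier n" and sup: "\<forall>A. x A \<noteq> 0 \<longrightarrow> A = {} \<or> (A = {0..<n} \<and> odd n)"
  shows "x \<in> cl_center n (eta :: nat \<Rightarrow> 'a::comm_ring_1)"
  unfolding cl_center_def
proof (intro CollectI conjI ballI x)
  fix y :: "nat set \<Rightarrow> 'a" assume y: "y \<in> cl_carrier n"
  show "cl_mult n eta x y = cl_mult n eta y x"
  proof (rule ext)
    fix C
    have "cl_mult n eta x y C = (\<Sum>A\<in>Pow {0..<n}. \<Sum>B\<in>Pow {0..<n}.
      if (B - A) \<union> (A - B) = C then blade_sign B A * (\<Prod>i\<in>B \<inter> A. eta i) * y B * x A else 0)"
      unfolding cl_mult_def
    proof (intro sum.cong refl)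
      fix A B assume A: "A \<in> Pow {0..<n}" and B: "B \<in> Pow {0..<n}"
      have e1: "(B - A) \<union> (A - B) = (A - B) \<union> (B - A)" by blast
      have e2: "B \<inter> A = A \<inter> B" by blast
      show "(if (A - B) \<union> (B - A) = C then blade_sign A B * (\<Prod>i\<in>A \<inter> B. eta i) * x A * y B else 0) =
         (if (B - A) \<union> (A - B) = C then blade_sign B A * (\<Prod>i\<in>B \<inter> A. eta i) * y B * x A else 0)"
      proof (cases "x A = 0")
        case True then show ?thesis by simp
      next
        case False
        then have "blade_sign A B = (blade_sign B A :: 'a)"
          using sup sign_comm[of A n B] B by auto
        then show ?thesis unfolding e1 e2 by (simp add: ac_simps)
      qed
    qed
    also have "\<dots> = cl_mult n eta y x C" unfolding cl_mult_def by (rule sum.swap)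
    finally show "cl_mult n eta x y C = cl_mult n eta y x C" .
  qed
qed


lemma neg_self_zero:
  assumes "(-1::'a::field_char_0) * a = a" shows "a = 0"
proof -
  have "- a = a" using assms by simp
  then have "a + a = 0" by (metis add.right_inverse)
  then have "2 * a = 0" by (metis mult_2)
  then show ?thesis by simp
qed

lemma rev_sq_bar01:
  fixes T :: "nat set \<Rightarrow> 'a::field_char_0"
  shows "cl_mult n eta (cl_rev T) T \<in> cl_bar01 n"
proof -
  let ?x = "cl_mult n eta (cl_rev T) T"
  have rx: "cl_rev ?x = ?x" by (simp only: rev_mult rev_rev)
  have r: "rsgn A * ?x A = ?x A" for A
    using fun_cong[OF rx, of A] by (simp only: cl_rev_rsgn)
  have z: "?x A = 0" if "card A mod 4 = 2 \<or> card A mod 4 = 3" for A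
  proof -
    have "(-1) * ?x A = ?x A" using r[of A] unfolding rsgn_bad[OF that] .
    then show ?thesis by (rule neg_self_zero)
  qed
  have m: "\<And>k::nat. \<not> (k mod 4 = 0 \<or> k mod 4 = 1) \<Longrightarrow> k mod 4 = 2 \<or> k mod 4 = 3"
    by presburger
  have "\<forall>A. ?x A \<noteq> 0 \<longrightarrow> card A \<in> {k. k mod 4 = 0 \<or> k mod 4 = 1}"
    using z m by blast
  then show ?thesis using mult_carrier[of n eta "cl_rev T" T]
    unfolding cl_bar01_def cl_grades_def by blast
qed

lemma claim_gen:
  fixes eta :: "nat \<Rightarrow> 'a::field_char_0"
  assumes eta: "\<forall>i<n. eta i \<noteq> 0"
  shows "cl_claim n eta"
proof -
  define K where "K = (if n mod 4 = 1 then {0, n} else {0::nat})"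
  have key: "cl_mult n eta (cl_rev T) T \<in> cl_center n eta \<longleftrightarrow> cl_mult n eta (cl_rev T) T \<in> cl_grades n K"
    for T :: "nat set \<Rightarrow> 'a"
  proof -
    let ?x = "cl_mult n eta (cl_rev T) T"
    have xc: "?x \<in> cl_carrier n" by (rule mult_carrier)
    have b: "\<And>A. ?x A \<noteq> 0 \<Longrightarrow> card A mod 4 = 0 \<or> card A mod 4 = 1"
      using rev_sq_bar01[of n eta T] by (auto simp: cl_bar01_def cl_grades_def)
    show ?thesis
    proof
      assume z: "?x \<in> cl_center n eta"
      have "card A \<in> K" if nz: "?x A \<noteq> 0" for A
        using center_support[OF eta z nz]
      proof
        assume "A = {}" then show ?thesis by (simp add: K_def)
      next
        assume h: "A = {0..<n} \<and> odd n"
        then have "card A = n" by simp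
        have o: "odd n" using h by simp
        have "n mod 4 = 0 \<or> n mod 4 = 1" using b[OF nz] \<open>card A = n\<close> by simp
        then have "n mod 4 = 1" using o by presburger
        then show ?thesis using \<open>card A = n\<close> by (simp add: K_def)
      qed
      then show "?x \<in> cl_grades n K" using xc by (auto simp: cl_grades_def)
    next
      assume g: "?x \<in> cl_grades n K"
      have "A = {} \<or> (A = {0..<n} \<and> odd n)" if nz: "?x A \<noteq> 0" for A
      proof -
        have A: "A \<subseteq> {0..<n}" using xc nz by (auto simp: cl_carrier_def)
        have fA: "finite A" using A finite_subset by blast
        have cK: "card A \<in> K" using g nz by (auto simp: cl_grades_def)
        show ?thesis
        proof (cases "card A = 0")
          case True then show ?thesis using fA by simp
        next
          case False
          then have "n mod 4 = 1" "card A = n" using cK by (auto simp: K_def split: if_splits)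
          then have "A = {0..<n}" using A by (simp add: card_subset_eq)
          moreover have "odd n" using \<open>n mod 4 = 1\<close> by presburger
          ultimately show ?thesis by simp
        qed
      qed
      then show "?x \<in> cl_center n eta" using center_intro[OF xc] by blast
    qed
  qed
  show ?thesis unfolding cl_claim_def
  proof (intro conjI ballI)
    fix T :: "nat set \<Rightarrow> 'a" assume "T \<in> cl_carrier n"
    show "cl_mult n eta (cl_rev T) T \<in> cl_bar01 n" by (rule rev_sq_bar01)
  next
    show "cl_A n eta = (if n mod 4 = 1
        then {T \<in> cl_units n eta (cl_carrier n).
                cl_mult n eta (cl_rev T) T \<in> cl_units n eta (cl_grades n {0, n})}
        else {T \<in> cl_units n eta (cl_carrier n).
                cl_mult n eta (cl_rev T) T \<in> cl_units n eta (cl_grades n {0})})"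
    proof (cases "n mod 4 = 1")
      case True
      then have k: "\<And>T. cl_mult n eta (cl_rev T) T \<in> cl_center n eta \<longleftrightarrow> cl_mult n eta (cl_rev T) T \<in> cl_grades n {0, n}"
        using key by (simp add: K_def)
      show ?thesis unfolding cl_A_def cl_units_def if_P[OF True] by (simp only: k mem_Collect_eq)
    next
      case False
      then have k: "\<And>T. cl_mult n eta (cl_rev T) T \<in> cl_center n eta \<longleftrightarrow> cl_mult n eta (cl_rev T) T \<in> cl_grades n {0}"
        using key by (simp add: K_def)
      show ?thesis unfolding cl_A_def cl_units_def if_not_P[OF False] by (simp only: k mem_Collect_eq)
    qed
  qed
qed

theorem mainTheorem5:
  fixes n :: nat
  assumes "n \<ge> 2"
  shows "(\<forall>p q. p + q = n \<longrightarrow> cl_claim n (eta_real p)) \<and>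
         cl_claim n (\<lambda>_. (1::complex))"
proof (intro conjI allI impI)
  fix p q :: nat
  show "cl_claim n (eta_real p)" by (rule claim_gen) (simp add: eta_real_def)
next
  show "cl_claim n (\<lambda>_. (1::complex))" by (rule claim_gen) simp
qed

end
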